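(* Let $G$ be a graph of order $n$ with no isolated vertices. Then $\gamma_{\rm gr}^t(G)=n$ if and only if there is an integer $k$ with $n=2k$ such that the vertices of $G$ can be labeled $x_1,\ldots,x_k,y_1,\ldots,y_k$ so that: (i) $x_i$ is adjacent to $y_i$ for each $i\in\{1,\ldots,k\}$; (ii) $\{x_1,\ldots,x_k\}$ is an independent set; and (iii) whenever $y_j$ is adjacent to $x_i$, we have $i \ge j$.
   Context: All graphs are finite, simple, without isolated vertices. $N(v)$ denotes the open neighborhood of $v$. A sequence $S=(v_1,\ldots,v_k)$ of distinct vertices of $G$ is a legal (open neighborhood) sequence if $N(v_i)\setminus \bigcup_{j=1}^{i-1} N(v_j)\neq\emptyset$ for every $i\in\{2,\ldots,k\}$. It is a total dominating sequence if moreover the set $\{v_1,\ldots,v_k\}$ is a total dominating set of $G$ (every vertex has a neighbor in it). The Grundy total domination number $\gamma_{\rm gr}^t(G)$ is the maximum length of a total dominating sequence of $G$. *)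

theory Defs
  imports Main
begin

definition graph :: "'a set \<Rightarrow> ('a \<Rightarrow> 'a \<Rightarrow> bool) \<Rightarrow> bool" where
  "graph V E \<longleftrightarrow> finite V \<and> (\<forall>u v. E u v \<longrightarrow> u \<in> V \<and> v \<in> V)
     \<and> (\<forall>u v. E u v \<longrightarrow> E v u) \<and> (\<forall>v. \<not> E v v)"

definition no_isolated :: "'a set \<Rightarrow> ('a \<Rightarrow> 'a \<Rightarrow> bool) \<Rightarrow> bool" where
  "no_isolated V E \<longleftrightarrow> (\<forall>v\<in>V. \<exists>u. E v u)"

definition nbhd :: "('a \<Rightarrow> 'a \<Rightarrow> bool) \<Rightarrow> 'a \<Rightarrow> 'a set" where
  "nbhd E v = {u. E v u}"

definition legal_seq :: "'a set \<Rightarrow> ('a \<Rightarrow> 'a \<Rightarrow> bool) \<Rightarrow> 'a list \<Rightarrow> bool" where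
  "legal_seq V E S \<longleftrightarrow> distinct S \<and> set S \<subseteq> V \<and>
     (\<forall>i. 0 < i \<and> i < length S \<longrightarrow>
        nbhd E (S ! i) - (\<Union>j<i. nbhd E (S ! j)) \<noteq> {})"

definition total_dominating :: "'a set \<Rightarrow> ('a \<Rightarrow> 'a \<Rightarrow> bool) \<Rightarrow> 'a set \<Rightarrow> bool" where
  "total_dominating V E D \<longleftrightarrow> (\<forall>v\<in>V. \<exists>u\<in>D. E v u)"

definition total_dom_seq :: "'a set \<Rightarrow> ('a \<Rightarrow> 'a \<Rightarrow> bool) \<Rightarrow> 'a list \<Rightarrow> bool" where
  "total_dom_seq V E S \<longleftrightarrow> legal_seq V E S \<and> total_dominating V E (set S)"

definition grundy_total_dom :: "'a set \<Rightarrow> ('a \<Rightarrow> 'a \<Rightarrow> bool) \<Rightarrow> nat" where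
  "grundy_total_dom V E = Max {length S | S. total_dom_seq V E S}"

end

theory Submission
  imports Defs
begin

lemma core:
  assumes G: "graph V E"
    and dS: "distinct S" and sS: "set S = V"
    and posS: "\<forall>i<length S. pos (S!i) = i"
    and fV: "\<forall>v\<in>V. f v \<in> V \<and> E v (f v)"
    and fK: "\<forall>u\<in>V. \<forall>v\<in>V. E u (f v) \<longrightarrow> pos v \<le> pos u"
  shows "\<exists>k::nat. card V = 2 * k \<and>
      (\<exists>x y :: nat \<Rightarrow> 'a.
         inj_on x {1..k} \<and> inj_on y {1..k} \<and> x ` {1..k} \<inter> y ` {1..k} = {} \<and>
         x ` {1..k} \<union> y ` {1..k} = V \<and>
         (\<forall>i\<in>{1..k}. E (x i) (y i)) \<and>
         (\<forall>i\<in>{1..k}. \<forall>j\<in>{1..k}. \<not> E (x i) (x j)) \<and>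
         (\<forall>i\<in>{1..k}. \<forall>j\<in>{1..k}. E (y j) (x i) \<longrightarrow> i \<ge> j))"
proof -
  have fin: "finite V" and sym: "\<And>u v. E u v \<Longrightarrow> E v u" and irr: "\<And>v. \<not> E v v"
    using G unfolding graph_def by auto
  have posinj: "inj_on pos V"
  proof (rule inj_onI)
    fix u v assume "u \<in> V" "v \<in> V" "pos u = pos v"
    then obtain i j where "i < length S" "S!i = u" "j < length S" "S!j = v"
      using sS by (metis in_set_conv_nth)
    then show "u = v" using posS \<open>pos u = pos v\<close> by auto
  qed
  have finj: "inj_on f V"
  proof (rule inj_onI)
    fix u v assume uv: "u \<in> V" "v \<in> V" "f u = f v"
    have "pos v \<le> pos u" using fK fV uv by metis
    moreover have "pos u \<le> pos v" using fK fV uv by metis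
    ultimately show "u = v" using posinj uv by (meson antisym inj_onD)
  qed
  have fsurj: "f ` V = V" using endo_inj_surj[OF fin _ finj] fV by auto
  have invol: "\<forall>v\<in>V. f (f v) = v"
  proof (rule ccontr)
    assume "\<not> (\<forall>v\<in>V. f (f v) = v)"
    then have "\<exists>v. v \<in> V \<and> f (f v) \<noteq> v" by auto
    then obtain m where m: "\<exists>v. v \<in> V \<and> f (f v) \<noteq> v \<and> pos v = m"
      and mmin: "\<forall>m'. (\<exists>v. v \<in> V \<and> f (f v) \<noteq> v \<and> pos v = m') \<longrightarrow> m \<le> m'"
      using exists_least_iff[of "\<lambda>m. \<exists>v. v \<in> V \<and> f (f v) \<noteq> v \<and> pos v = m"]
      by (metis not_less)
    then obtain v where v: "v \<in> V" "f (f v) \<noteq> v" "pos v = m" by blast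
    obtain q where q: "q \<in> V" "f q = v" using fsurj v(1) by (metis imageE)
    have qC: "f (f q) \<noteq> q"
    proof
      assume "f (f q) = q" then have "f v = q" using q by simp
      then show False using v q by simp
    qed
    obtain z where z: "z \<in> V" "f z = q" using fsurj q(1) by (metis imageE)
    have zC: "f (f z) \<noteq> z"
    proof
      assume "f (f z) = z" then have "f q = z" using z by simp
      then have "z = v" using q by simp
      then show False using v q z by simp
    qed
    have "E q v" using fV q by auto
    then have "E v (f z)" using sym z by simp
    then have "pos z \<le> pos v" using fK v(1) z(1) by blast
    moreover have "m \<le> pos z" using mmin z zC by blast
    ultimately have "pos z = pos v" using v by simp
    then have "z = v" using posinj z v by (meson inj_onD)
    then show False using v q z by simp
  qed
  have fne: "\<forall>v\<in>V. pos (f v) \<noteq> pos v"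
    using fV irr posinj by (metis inj_onD)
  define X where "X = {v\<in>V. pos v < pos (f v)}"
  define L where "L = filter (\<lambda>v. v \<in> X) S"
  define k where "k = length L"
  define x where "x = (\<lambda>i. L ! (i - 1))"
  define y where "y = (\<lambda>i. f (x i))"
  have XV: "X \<subseteq> V" unfolding X_def by auto
  have dL: "distinct L" unfolding L_def using dS by simp
  have sL: "set L = X" unfolding L_def using sS XV by auto
  have sortS: "sorted_wrt (\<lambda>a b. pos a < pos b) S"
    unfolding sorted_wrt_iff_nth_less using posS by auto
  have sortL: "sorted_wrt (\<lambda>a b. pos a < pos b) L"
    unfolding L_def by (rule sorted_wrt_filter[OF sortS])
  have ximg: "x ` {1..k} = X"
  proof -
    have "x ` {1..k} = (\<lambda>i. L ! i) ` {..<k}"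
    proof
      show "x ` {1..k} \<subseteq> (!) L ` {..<k}" unfolding x_def by force
      show "(!) L ` {..<k} \<subseteq> x ` {1..k}"
      proof
        fix a assume "a \<in> (!) L ` {..<k}"
        then obtain i where "i < k" "a = L ! i" by auto
        then have "a = x (Suc i)" "Suc i \<in> {1..k}" unfolding x_def by auto
        then show "a \<in> x ` {1..k}" by blast
      qed
    qed
    also have "\<dots> = set L" unfolding k_def by (auto simp: in_set_conv_nth)
    finally show ?thesis using sL by simp
  qed
  have xinj: "inj_on x {1..k}"
  proof (rule inj_onI)
    fix i j assume "i \<in> {1..k}" "j \<in> {1..k}" "x i = x j"
    then have "L ! (i - 1) = L ! (j - 1)" "i - 1 < length L" "j - 1 < length L" unfolding x_def k_def by auto
    then have "i - 1 = j - 1" using dL nth_eq_iff_index_eq by blast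
    then show "i = j" using \<open>i \<in> {1..k}\<close> \<open>j \<in> {1..k}\<close> by auto
  qed
  have xmono: "\<And>i j. i \<in> {1..k} \<Longrightarrow> j \<in> {1..k} \<Longrightarrow> i < j \<Longrightarrow> pos (x i) < pos (x j)"
  proof -
    fix i j assume "i \<in> {1..k}" "j \<in> {1..k}" "i < j"
    then have "i - 1 < j - 1" "j - 1 < length L" unfolding k_def by auto
    then show "pos (x i) < pos (x j)" using sortL unfolding sorted_wrt_iff_nth_less x_def by blast
  qed
  have yimg: "y ` {1..k} = f ` X" unfolding y_def using ximg by (metis image_image)
  have yinj: "inj_on y {1..k}"
  proof (rule inj_onI)
    fix i j assume ij: "i \<in> {1..k}" "j \<in> {1..k}" "y i = y j"
    have "x i \<in> V" "x j \<in> V" using ximg XV ij by auto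
    then have "x i = x j" using ij finj unfolding y_def by (meson inj_onD)
    then show "i = j" using xinj ij by (meson inj_onD)
  qed
  have disj: "X \<inter> f ` X = {}"
  proof (rule ccontr)
    assume "X \<inter> f ` X \<noteq> {}"
    then obtain w where w: "w \<in> X" "f w \<in> X" by auto
    then have "pos w < pos (f w)" "pos (f w) < pos (f (f w))" unfolding X_def by auto
    moreover have "f (f w) = w" using invol w XV by auto
    ultimately show False by simp
  qed
  have cover: "X \<union> f ` X = V"
  proof
    show "X \<union> f ` X \<subseteq> V" using XV fV by auto
    show "V \<subseteq> X \<union> f ` X"
    proof
      fix v assume v: "v \<in> V"
      show "v \<in> X \<union> f ` X"
      proof (cases "pos v < pos (f v)")
        case True then show ?thesis unfolding X_def using v by auto
      next
        case False
        then have "pos (f v) < pos v" using fne v by (meson linorder_neqE_nat)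
        then have "f v \<in> X" unfolding X_def using v fV invol by auto
        moreover have "v = f (f v)" using invol v by auto
        ultimately show ?thesis by blast
      qed
    qed
  qed
  have cardX: "card X = k" unfolding k_def using sL dL distinct_card by metis
  have cardV: "card V = 2 * k"
  proof -
    have "card V = card X + card (f ` X)"
      using cover disj fin card_Un_disjoint XV by (metis finite_Un)
    also have "card (f ` X) = card X" using card_image inj_on_subset[OF finj XV] by blast
    finally show ?thesis using cardX by simp
  qed
  have xX: "\<And>i. i \<in> {1..k} \<Longrightarrow> x i \<in> X" using ximg by blast
  have c1: "\<forall>i\<in>{1..k}. E (x i) (y i)" unfolding y_def using xX XV fV by blast
  have c2: "\<forall>i\<in>{1..k}. \<forall>j\<in>{1..k}. \<not> E (x i) (x j)"
  proof (intro ballI notI)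
    fix i j assume ij: "i \<in> {1..k}" "j \<in> {1..k}" and e: "E (x i) (x j)"
    define v w where "v = x i" and "w = x j"
    have vw: "v \<in> X" "w \<in> X" unfolding v_def w_def using xX ij by auto
    then have VV: "v \<in> V" "w \<in> V" "f v \<in> V" "f w \<in> V" using XV fV by auto
    have "E v (f (f w))" using e invol VV unfolding v_def w_def by auto
    then have a: "pos (f w) \<le> pos v" using fK VV by blast
    have "E w (f (f v))" using sym e invol VV unfolding v_def w_def by auto
    then have b: "pos (f v) \<le> pos w" using fK VV by blast
    show False using a b vw unfolding X_def by auto
  qed
  have c3: "\<forall>i\<in>{1..k}. \<forall>j\<in>{1..k}. E (y j) (x i) \<longrightarrow> i \<ge> j"
  proof (intro ballI impI)
    fix i j assume ij: "i \<in> {1..k}" "j \<in> {1..k}" and e: "E (y j) (x i)"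
    have "E (x i) (f (x j))" using sym e unfolding y_def by auto
    then have "pos (x j) \<le> pos (x i)" using fK xX ij XV by blast
    then show "j \<le> i" using xmono ij by (meson not_less)
  qed
  have R: "x ` {1..k} \<inter> y ` {1..k} = {}" "x ` {1..k} \<union> y ` {1..k} = V"
    using ximg yimg disj cover by auto
  show ?thesis
    apply (rule exI[of _ k], rule conjI[OF cardV], rule exI[of _ x], rule exI[of _ y])
    using xinj yinj R c1 c2 c3 by blast
qed

lemma legal_iff_wit:
  "legal_seq V E S \<longleftrightarrow> distinct S \<and> set S \<subseteq> V \<and>
     (\<forall>i. 0 < i \<and> i < length S \<longrightarrow> (\<exists>w. E (S ! i) w \<and> (\<forall>j<i. \<not> E (S ! j) w)))"
  unfolding legal_seq_def nbhd_def by blast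

lemma tds_len:
  assumes "graph V E" "total_dom_seq V E S" shows "length S \<le> card V"
proof -
  have "distinct S" "set S \<subseteq> V" "finite V"
    using assms unfolding total_dom_seq_def legal_seq_def graph_def by auto
  then show ?thesis by (metis card_mono distinct_card)
qed

lemma tds_exists:
  assumes G: "graph V E" and NI: "no_isolated V E"
  shows "\<exists>S. total_dom_seq V E S"
proof -
  have fin: "finite V" and sym: "\<And>u v. E u v \<Longrightarrow> E v u" and inV: "\<And>u v. E u v \<Longrightarrow> v \<in> V"
    using G unfolding graph_def by auto
  let ?P = "\<lambda>m. \<exists>S. legal_seq V E S \<and> length S = m"
  have P0: "?P 0" by (rule exI[of _ "[]"]) (simp add: legal_seq_def)
  have bnd: "\<forall>m. ?P m \<longrightarrow> m \<le> card V"
  proof (intro allI impI)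
    fix m assume "?P m"
    then obtain S where "legal_seq V E S" "length S = m" by blast
    then show "m \<le> card V" using fin unfolding legal_seq_def by (metis card_mono distinct_card)
  qed
  have "\<exists>m. ?P m \<and> (\<forall>m'. ?P m' \<longrightarrow> m' \<le> m)"
    by (rule Nat.ex_has_greatest_nat[OF P0 bnd])
  then obtain m where Pm: "?P m" and mmax: "\<forall>m'. ?P m' \<longrightarrow> m' \<le> m"
    by blast
  obtain S where S: "legal_seq V E S" "length S = m" using Pm by blast
  have "total_dominating V E (set S)"
    unfolding total_dominating_def
  proof (rule ccontr)
    assume "\<not> (\<forall>v\<in>V. \<exists>u\<in>set S. E v u)"
    then obtain v where v: "v \<in> V" "\<forall>u\<in>set S. \<not> E v u" by blast
    obtain u where u: "E v u" using NI v unfolding no_isolated_def by blast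
    have uS: "u \<notin> set S" using u v by blast
    have uV: "u \<in> V" using inV u by blast
    have L: "legal_seq V E (S @ [u])"
      unfolding legal_iff_wit
    proof (intro conjI allI impI)
      show "distinct (S @ [u])" using S uS unfolding legal_seq_def by simp
      show "set (S @ [u]) \<subseteq> V" using S uV unfolding legal_seq_def by simp
      fix i assume i: "0 < i \<and> i < length (S @ [u])"
      show "\<exists>w. E ((S @ [u]) ! i) w \<and> (\<forall>j<i. \<not> E ((S @ [u]) ! j) w)"
      proof (cases "i < length S")
        case True
        then obtain w where w: "E (S ! i) w" "\<forall>j<i. \<not> E (S ! j) w"
          using S(1) i unfolding legal_iff_wit by blast
        show ?thesis
          apply (rule exI[of _ w])
          using w True by (simp add: nth_append)
      next
        case False
        then have ieq: "i = length S" using i by simp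
        show ?thesis
        proof (rule exI[of _ v], intro conjI allI impI)
          show "E ((S @ [u]) ! i) v" using ieq sym u by simp
          fix j assume "j < i"
          then have "(S @ [u]) ! j = S ! j" "S ! j \<in> set S" using ieq by (auto simp: nth_append)
          then show "\<not> E ((S @ [u]) ! j) v" using v(2) sym by auto
        qed
      qed
    qed
    then have "?P (length S + 1)" by auto
    then have "length S + 1 \<le> m" using mmax by blast
    then show False using S by simp
  qed
  then show ?thesis using S unfolding total_dom_seq_def by blast
qed

lemma from_labeling:
  assumes G: "graph V E" and NI: "no_isolated V E"
    and cV: "card V = 2 * k"
    and xinj: "inj_on x {1..k}" and yinj: "inj_on y {1..k}"
    and disj: "x ` {1..k} \<inter> y ` {1..k} = {}"
    and cov: "x ` {1..k} \<union> y ` {1..k} = V"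
    and c1: "\<forall>i\<in>{1..k}. E (x i) (y i)"
    and c2: "\<forall>i\<in>{1..k}. \<forall>j\<in>{1..k}. \<not> E (x i) (x j)"
    and c3: "\<forall>i\<in>{1..k}. \<forall>j\<in>{1..k}. E (y j) (x i) \<longrightarrow> i \<ge> j"
  shows "\<exists>S. total_dom_seq V E S \<and> length S = card V"
proof -
  have sym: "\<And>u v. E u v \<Longrightarrow> E v u" and inV: "\<And>u v. E u v \<Longrightarrow> v \<in> V"
    using G unfolding graph_def by auto
  define h where "h = (\<lambda>t. if t < k then x (t+1) else y (2*k - t))"
  define S where "S = map h [0..<2*k]"
  have Snth: "\<And>t. t < 2*k \<Longrightarrow> S ! t = h t" unfolding S_def by simp
  have hinj: "inj_on h {0..<2*k}"
  proof (rule inj_onI)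
    fix a b assume a: "a \<in> {0..<2*k}" and b: "b \<in> {0..<2*k}" and hab: "h a = h b"
    show "a = b"
    proof (cases "a < k"; cases "b < k")
      assume "a < k" "b < k"
      then have "x (a+1) = x (b+1)" "a+1 \<in> {1..k}" "b+1 \<in> {1..k}" using hab unfolding h_def by auto
      then have "a+1 = b+1" using inj_onD[OF xinj] by blast
      then show ?thesis by simp
    next
      assume "a < k" "\<not> b < k"
      then have eq: "x (a+1) = y (2*k-b)" and m1: "a+1 \<in> {1..k}" and m2: "2*k-b \<in> {1..k}" using hab b unfolding h_def by auto
      have "x (a+1) \<in> x ` {1..k}" using m1 by (rule imageI)
      moreover have "x (a+1) \<in> y ` {1..k}" unfolding eq using m2 by (rule imageI)
      ultimately have False using disj by blast
      then show ?thesis ..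
    next
      assume "\<not> a < k" "b < k"
      then have eq: "y (2*k-a) = x (b+1)" and m1: "b+1 \<in> {1..k}" and m2: "2*k-a \<in> {1..k}" using hab a unfolding h_def by auto
      have "x (b+1) \<in> x ` {1..k}" using m1 by (rule imageI)
      moreover have "x (b+1) \<in> y ` {1..k}" unfolding eq[symmetric] using m2 by (rule imageI)
      ultimately have False using disj by blast
      then show ?thesis ..
    next
      assume "\<not> a < k" "\<not> b < k"
      then have "y (2*k-a) = y (2*k-b)" "2*k-a \<in> {1..k}" "2*k-b \<in> {1..k}" using hab a b unfolding h_def by auto
      then have "2*k-a = 2*k-b" using inj_onD[OF yinj] by blast
      then show ?thesis using a b by auto
    qed
  qed
  have himg: "h ` {0..<2*k} = V"
  proof
    show "h ` {0..<2*k} \<subseteq> V"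
    proof
      fix v assume "v \<in> h ` {0..<2*k}"
      then obtain t where t: "t < 2*k" "v = h t" by auto
      show "v \<in> V"
      proof (cases "t < k")
        case True then have "v = x (t+1)" "t+1 \<in> {1..k}" using t unfolding h_def by auto
        then show ?thesis using cov by blast
      next
        case False then have "v = y (2*k-t)" "2*k-t \<in> {1..k}" using t unfolding h_def by auto
        then show ?thesis using cov by blast
      qed
    qed
    show "V \<subseteq> h ` {0..<2*k}"
    proof
      fix v assume "v \<in> V"
      then consider i where "i \<in> {1..k}" "v = x i" | i where "i \<in> {1..k}" "v = y i" using cov by blast
      then show "v \<in> h ` {0..<2*k}"
      proof cases
        case 1
        then have "h (i - 1) = v" "i - 1 \<in> {0..<2*k}" unfolding h_def by auto
        then show ?thesis by (metis imageI)
      next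
        case 2
        then have "h (2*k - i) = v" "2*k - i \<in> {0..<2*k}" unfolding h_def by auto
        then show ?thesis by (metis imageI)
      qed
    qed
  qed
  have sS: "set S = V" unfolding S_def using himg by simp
  have dS: "distinct S" unfolding S_def using hinj by (simp add: distinct_map)
  have lS: "length S = 2*k" unfolding S_def by simp
  have wit: "\<And>i. i < 2*k \<Longrightarrow> \<exists>w. E (S ! i) w \<and> (\<forall>j<i. \<not> E (S ! j) w)"
  proof -
    fix i assume i: "i < 2*k"
    show "\<exists>w. E (S ! i) w \<and> (\<forall>j<i. \<not> E (S ! j) w)"
    proof (cases "i < k")
      case True
      show ?thesis
      proof (rule exI[of _ "y (i+1)"], intro conjI allI impI)
        show "E (S ! i) (y (i+1))" using Snth i True c1 unfolding h_def by auto
        fix j assume j: "j < i"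
        then have "S ! j = x (j+1)" using Snth i True unfolding h_def by auto
        moreover have "\<not> E (y (i+1)) (x (j+1))"
        proof
          assume e: "E (y (i+1)) (x (j+1))"
          have "i+1 \<in> {1..k}" "j+1 \<in> {1..k}" using j True by auto
          then have "i+1 \<le> j+1" using c3 e by blast
          then show False using j by simp
        qed
        ultimately show "\<not> E (S ! j) (y (i+1))" using sym[of "S ! j" "y (i+1)"] by auto
      qed
    next
      case False
      show ?thesis
      proof (rule exI[of _ "x (2*k-i)"], intro conjI allI impI)
        have Si: "S ! i = y (2*k-i)" using Snth i False unfolding h_def by auto
        have mi: "2*k-i \<in> {1..k}" using i False by auto
        have "E (x (2*k-i)) (y (2*k-i))" using c1 mi by blast
        then show "E (S ! i) (x (2*k-i))" unfolding Si by (rule sym)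
        fix j assume j: "j < i"
        show "\<not> E (S ! j) (x (2*k-i))"
        proof (cases "j < k")
          case True
          then have Sj: "S ! j = x (j+1)" using Snth i j unfolding h_def by auto
          have mj: "j+1 \<in> {1..k}" using True by auto
          show ?thesis unfolding Sj using c2 mi mj by blast
        next
          case False
          then have Sj: "S ! j = y (2*k-j)" using Snth i j unfolding h_def by auto
          have mj: "2*k-j \<in> {1..k}" using False j i by auto
          have lt: "\<not> (2*k-j \<le> 2*k-i)" using j i False by auto
          show ?thesis unfolding Sj
          proof
            assume e: "E (y (2*k-j)) (x (2*k-i))"
            have "2*k-j \<le> 2*k-i" using c3 mi mj e by blast
            then show False using lt by simp
          qed
        qed
      qed
    qed
  qed
  have "legal_seq V E S" unfolding legal_iff_wit using dS sS lS wit by auto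
  moreover have "total_dominating V E (set S)"
    unfolding total_dominating_def sS using NI inV unfolding no_isolated_def by blast
  ultimately show ?thesis using lS cV unfolding total_dom_seq_def by auto
qed

lemma to_labeling:
  assumes G: "graph V E" and NI: "no_isolated V E"
    and T: "total_dom_seq V E S" and len: "length S = card V"
  shows "\<exists>k::nat. card V = 2 * k \<and>
      (\<exists>x y :: nat \<Rightarrow> 'a.
         inj_on x {1..k} \<and> inj_on y {1..k} \<and> x ` {1..k} \<inter> y ` {1..k} = {} \<and>
         x ` {1..k} \<union> y ` {1..k} = V \<and>
         (\<forall>i\<in>{1..k}. E (x i) (y i)) \<and>
         (\<forall>i\<in>{1..k}. \<forall>j\<in>{1..k}. \<not> E (x i) (x j)) \<and>
         (\<forall>i\<in>{1..k}. \<forall>j\<in>{1..k}. E (y j) (x i) \<longrightarrow> i \<ge> j))"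
proof -
  have fin: "finite V" and inV: "\<And>u v. E u v \<Longrightarrow> v \<in> V"
    using G unfolding graph_def by auto
  have L: "legal_seq V E S" using T unfolding total_dom_seq_def by blast
  have dS: "distinct S" and sub: "set S \<subseteq> V" using L unfolding legal_seq_def by auto
  have sS: "set S = V"
    using card_subset_eq[OF fin sub] dS len distinct_card by metis
  define pos where "pos = (\<lambda>v. THE i. i < length S \<and> S ! i = v)"
  have posS: "\<forall>i<length S. pos (S!i) = i"
  proof (intro allI impI)
    fix i assume i: "i < length S"
    show "pos (S!i) = i" unfolding pos_def
      by (rule the_equality) (use i dS nth_eq_iff_index_eq in auto)
  qed
  have posV: "\<And>v. v \<in> V \<Longrightarrow> pos v < length S \<and> S ! pos v = v"
  proof -
    fix v assume "v \<in> V"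
    then have "\<exists>!i. i < length S \<and> S ! i = v" using distinct_Ex1[OF dS] sS by blast
    then show "pos v < length S \<and> S ! pos v = v" unfolding pos_def by (rule theI')
  qed
  define F where "F = (\<lambda>i. nbhd E (S ! i) - (\<Union>j<i. nbhd E (S ! j)))"
  have Fne: "\<And>i. i < length S \<Longrightarrow> F i \<noteq> {}"
  proof -
    fix i assume i: "i < length S"
    show "F i \<noteq> {}"
    proof (cases "i = 0")
      case True
      have "S ! 0 \<in> V" using i True sS nth_mem by blast
      then obtain u where "E (S ! 0) u" using NI unfolding no_isolated_def by blast
      then show ?thesis unfolding F_def nbhd_def using True by auto
    next
      case False
      then show ?thesis using L i unfolding legal_seq_def F_def by auto
    qed
  qed
  define f where "f = (\<lambda>v. SOME w. w \<in> F (pos v))"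
  have fF: "\<And>v. v \<in> V \<Longrightarrow> f v \<in> F (pos v)"
    unfolding f_def using Fne posV by (simp add: some_in_eq)
  have fV: "\<forall>v\<in>V. f v \<in> V \<and> E v (f v)"
  proof
    fix v assume v: "v \<in> V"
    have "f v \<in> nbhd E (S ! pos v)" using fF[OF v] unfolding F_def by auto
    then have "E v (f v)" using posV[OF v] unfolding nbhd_def by simp
    then show "f v \<in> V \<and> E v (f v)" using inV by blast
  qed
  have fK: "\<forall>u\<in>V. \<forall>v\<in>V. E u (f v) \<longrightarrow> pos v \<le> pos u"
  proof (intro ballI impI)
    fix u v assume u: "u \<in> V" and v: "v \<in> V" and e: "E u (f v)"
    show "pos v \<le> pos u"
    proof (rule ccontr)
      assume "\<not> pos v \<le> pos u"
      then have "pos u < pos v" by simp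
      then have "f v \<notin> nbhd E (S ! pos u)" using fF[OF v] unfolding F_def by auto
      then show False using e posV[OF u] unfolding nbhd_def by simp
    qed
  qed
  show ?thesis by (rule core[OF G dS sS posS fV fK])
qed

lemma from_labeling':
  assumes G: "graph V E" and NI: "no_isolated V E"
  and H: "\<exists>k::nat. card V = 2 * k \<and>
      (\<exists>x y :: nat \<Rightarrow> 'a.
         inj_on x {1..k} \<and> inj_on y {1..k} \<and> x ` {1..k} \<inter> y ` {1..k} = {} \<and>
         x ` {1..k} \<union> y ` {1..k} = V \<and>
         (\<forall>i\<in>{1..k}. E (x i) (y i)) \<and>
         (\<forall>i\<in>{1..k}. \<forall>j\<in>{1..k}. \<not> E (x i) (x j)) \<and>
         (\<forall>i\<in>{1..k}. \<forall>j\<in>{1..k}. E (y j) (x i) \<longrightarrow> i \<ge> j))"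
  shows "\<exists>S. total_dom_seq V E S \<and> length S = card V"
proof -
  from H obtain k and x y :: "nat \<Rightarrow> 'a" where "card V = 2 * k" "inj_on x {1..k}" "inj_on y {1..k}"
    "x ` {1..k} \<inter> y ` {1..k} = {}" "x ` {1..k} \<union> y ` {1..k} = V"
    "\<forall>i\<in>{1..k}. E (x i) (y i)" "\<forall>i\<in>{1..k}. \<forall>j\<in>{1..k}. \<not> E (x i) (x j)"
    "\<forall>i\<in>{1..k}. \<forall>j\<in>{1..k}. E (y j) (x i) \<longrightarrow> i \<ge> j" by blast
  then show ?thesis by (rule from_labeling[OF G NI])
qed

theorem mainTheorem5:
  fixes V :: "'a set" and E :: "'a \<Rightarrow> 'a \<Rightarrow> bool"
  assumes "graph V E" and "no_isolated V E"
  shows "grundy_total_dom V E = card V \<longleftrightarrow>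
    (\<exists>k::nat. card V = 2 * k \<and>
      (\<exists>x y :: nat \<Rightarrow> 'a.
         inj_on x {1..k} \<and> inj_on y {1..k} \<and> x ` {1..k} \<inter> y ` {1..k} = {} \<and>
         x ` {1..k} \<union> y ` {1..k} = V \<and>
         (\<forall>i\<in>{1..k}. E (x i) (y i)) \<and>
         (\<forall>i\<in>{1..k}. \<forall>j\<in>{1..k}. \<not> E (x i) (x j)) \<and>
         (\<forall>i\<in>{1..k}. \<forall>j\<in>{1..k}. E (y j) (x i) \<longrightarrow> i \<ge> j)))"
proof -
  define A where "A = {length S | S. total_dom_seq V E S}"
  have Asub: "A \<subseteq> {..card V}"
  proof
    fix m assume "m \<in> A"
    then obtain S where "m = length S" "total_dom_seq V E S" unfolding A_def by blast
    then show "m \<in> {..card V}" using tds_len[OF assms(1)] by simp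
  qed
  have finA: "finite A" using Asub finite_subset by blast
  obtain S0 where "total_dom_seq V E S0" using tds_exists[OF assms] by blast
  then have "length S0 \<in> A" unfolding A_def by blast
  then have neA: "A \<noteq> {}" by blast
  have gA: "grundy_total_dom V E = Max A" unfolding A_def grundy_total_dom_def by simp
  have D1: "grundy_total_dom V E = card V \<Longrightarrow> \<exists>S. total_dom_seq V E S \<and> length S = card V"
  proof -
    assume "grundy_total_dom V E = card V"
    then have "card V \<in> A" using gA Max_in[OF finA neA] by simp
    then obtain S where "card V = length S" "total_dom_seq V E S" unfolding A_def by blast
    then have "total_dom_seq V E S \<and> length S = card V" by simp
    then show ?thesis by (rule exI)
  qed
  have D2: "\<And>S. total_dom_seq V E S \<Longrightarrow> length S = card V \<Longrightarrow> grundy_total_dom V E = card V"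
  proof -
    fix S assume "total_dom_seq V E S" "length S = card V"
    then have "\<exists>S'. card V = length S' \<and> total_dom_seq V E S'" by (intro exI[of _ S]) simp
    then have "card V \<in> A" unfolding A_def by simp
    then have "Max A = card V" using Asub finA by (intro Max_eqI) auto
    then show "grundy_total_dom V E = card V" using gA by simp
  qed
  show ?thesis
    apply (rule iffI)
    subgoal premises p
    proof -
      obtain S where S: "total_dom_seq V E S" "length S = card V" using D1[OF p] by blast
      show ?thesis by (rule to_labeling[OF assms S])
    qed
    subgoal premises p
    proof -
      obtain S where "total_dom_seq V E S" "length S = card V"
        using from_labeling'[OF assms p] by blast
      then show ?thesis by (rule D2)
    qed
    done
qed

end
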